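(* Let $U^{(n)}$ be uniformly distributed on $\{1,\dots,n\}$ and, for $1\le m<n$, put $\widetilde U^{(n,m)}:=\prod_{m<p\le n,\ p\ \text{prime}}p^{\mathbbm{1}_{\{\lambda_p(U^{(n)})\ge1\}}}$. Assume that $m_n>n^{1/2}$ for all sufficiently large $n$ and $m_n=o(n)$ as $n\to\infty$. Then $${\rm Var}\bigl(\log\widetilde U^{(n,m_n)}\bigr)\sim 2^{-1}(\log n-\log m_n)(3\log m_n-\log n),\qquad n\to\infty.$$
   Context: For a prime $p$ and $k\in\mathbb{N}$, $\lambda_p(k)$ is the exponent of $p$ in the prime factorization of $k$. $a_n\sim b_n$ means $a_n/b_n\to1$. *)

theory Defs
  imports "HOL-Probability.Probability" "HOL-Library.Landau_Symbols" "HOL-Computational_Algebra.Primes"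
begin

text \<open>The p-adic valuation lambda_p(k) is the library's multiplicity p k.
  Utilde n m k = product over primes p with m < p <= n of p^(indicator of lambda_p(k) >= 1).\<close>
definition Utilde :: "nat \<Rightarrow> nat \<Rightarrow> nat \<Rightarrow> nat" where
  "Utilde n m k = (\<Prod>p\<in>{p. prime p \<and> m < p \<and> p \<le> n}.
      p ^ (if multiplicity p k \<ge> 1 then 1 else 0))"

end

theory Submission
  imports Defs
begin


lemma prod_primes_dvd:
  fixes A :: "nat set"
  assumes "finite A" "\<forall>p\<in>A. prime p \<and> p dvd N"
  shows "(\<Prod>p\<in>A. p) dvd N"
  using assms
proof (induction A rule: finite_induct)
  case empty then show ?case by simp
next
  case (insert x F)
  have cop: "coprime x (\<Prod>p\<in>F. p)"
    using insert by (intro prod_coprime_right) (metis insertCI primes_coprime)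
  have "x * (\<Prod>p\<in>F. p) dvd N"
    using insert cop by (intro divides_mult) auto
  then show ?case using insert by simp
qed

lemma central_binom_le: "(2*k+1) choose k \<le> 4^k"
proof -
  have s: "((2*k+1) choose k) + ((2*k+1) choose (k+1)) \<le> (\<Sum>i\<le>2*k+1. (2*k+1) choose i)"
  proof -
    have "(\<Sum>i\<in>{k,k+1}. (2*k+1) choose i) \<le> (\<Sum>i\<le>2*k+1. (2*k+1) choose i)"
      by (rule sum_mono2) auto
    then show ?thesis by simp
  qed
  have "(2*k+1) choose (k+1) = (2*k+1) choose k"
    using binomial_symmetric[of k "2*k+1"] by simp
  then have "2 * ((2*k+1) choose k) \<le> 2^(2*k+1)" using s choose_row_sum[of "2*k+1"] by simp
  then show ?thesis by (simp add: power_mult)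
qed

lemma prime_dvd_central_binom:
  assumes "prime p" "k+1 < p" "p \<le> 2*k+1"
  shows "p dvd ((2*k+1) choose k)"
proof -
  have "fact k * fact (k+1) * ((2*k+1) choose k) = (fact (2*k+1) :: nat)"
    using binomial_fact_lemma[of k "2*k+1"] by (simp add: Suc_diff_le)
  moreover have "p dvd (fact (2*k+1) :: nat)"
    using assms prime_ge_1_nat by (intro dvd_fact) auto
  ultimately have "p dvd fact k * fact (k+1) * ((2*k+1) choose k)" by simp
  moreover have "\<not> p dvd (fact k :: nat)" "\<not> p dvd (fact (k+1) :: nat)"
    using assms prime_dvd_fact_iff[of p] by (simp_all only: not_le)
  ultimately show ?thesis using assms(1) by (metis prime_dvd_mult_iff)
qed

lemma prod_primes_le: "(\<Prod>p\<in>{p. prime p \<and> p \<le> n}. p) \<le> (4::nat)^n"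
proof (induction n rule: less_induct)
  case (less n)
  show ?case
  proof (cases "n \<le> 2")
    case True
    then have "n = 0 \<or> n = 1 \<or> n = 2" by auto
    moreover have e: "{p. prime p \<and> p \<le> (0::nat)} = {}" "{p. prime p \<and> p \<le> (1::nat)} = {}"
      "{p. prime p \<and> p \<le> (2::nat)} = {2}"
      using prime_ge_2_nat by (auto intro: antisym dest!: prime_ge_2_nat)
    ultimately show ?thesis by (elim disjE) (simp_all only: e, simp_all)
  next
    case False
    show ?thesis
    proof (cases "even n")
      case True
      then have np: "\<not> prime n" using False
        using prime_odd_nat[of n] by auto
      have "{p. prime p \<and> p \<le> n} = {p. prime p \<and> p \<le> n - 1}"
      proof (intro Collect_cong iffI conjI)
        fix p assume "prime p \<and> p \<le> n"
        then have "p \<noteq> n" "p \<le> n" "prime p" using np by auto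
        then show "prime p" "p \<le> n - 1" by auto
      next
        fix p assume "prime p \<and> p \<le> n - 1"
        then show "prime p" "p \<le> n" by auto
      qed
      then have "(\<Prod>p\<in>{p. prime p \<and> p \<le> n}. p) \<le> 4^(n-1)" using less[of "n-1"] False by simp
      also have "\<dots> \<le> 4^n" by (intro power_increasing) auto
      finally show ?thesis .
    next
      case odd: False
      then obtain k where k: "n = 2*k+1" using oddE by blast
      have k1: "k \<ge> 1" using False k by simp
      have split: "{p. prime p \<and> p \<le> n} = {p. prime p \<and> p \<le> k+1} \<union> {p. prime p \<and> k+1 < p \<and> p \<le> 2*k+1}"
        using k by auto
      have fin1: "finite {p. prime p \<and> p \<le> k+1}" by simp
      have fin2: "finite {p. prime p \<and> k+1 < p \<and> p \<le> 2*k+1}" by (rule finite_subset[of _ "{..2*k+1}"]) auto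
      have "(\<Prod>p\<in>{p. prime p \<and> p \<le> n}. p) = (\<Prod>p\<in>{p. prime p \<and> p \<le> k+1}. p) * (\<Prod>p\<in>{p. prime p \<and> k+1 < p \<and> p \<le> 2*k+1}. p)"
        unfolding split by (rule prod.union_disjoint[OF fin1 fin2]) auto
      also have "\<dots> \<le> 4^(k+1) * 4^k"
      proof (rule mult_le_mono)
        show "(\<Prod>p\<in>{p. prime p \<and> p \<le> k+1}. p) \<le> 4^(k+1)" using less[of "k+1"] k k1 by simp
        have "(\<Prod>p\<in>{p. prime p \<and> k+1 < p \<and> p \<le> 2*k+1}. p) dvd ((2*k+1) choose k)"
          using fin2 prime_dvd_central_binom by (intro prod_primes_dvd) auto
        then have "(\<Prod>p\<in>{p. prime p \<and> k+1 < p \<and> p \<le> 2*k+1}. p) \<le> ((2*k+1) choose k)"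
          by (rule dvd_imp_le) simp
        then show "(\<Prod>p\<in>{p. prime p \<and> k+1 < p \<and> p \<le> 2*k+1}. p) \<le> 4^k"
          using central_binom_le le_trans by blast
      qed
      also have "\<dots> = 4^n" using k by (simp add: power_add[symmetric])
      finally show ?thesis .
    qed
  qed
qed

definition theta :: "nat \<Rightarrow> real" where
  "theta n = (\<Sum>p\<in>{p. prime p \<and> p \<le> n}. ln (real p))"

lemma theta_le: "theta n \<le> ln 4 * real n"
proof -
  have fin: "finite {p. prime p \<and> p \<le> n}" by simp
  have "theta n = ln (real (\<Prod>p\<in>{p. prime p \<and> p \<le> n}. p))"
    unfolding theta_def of_nat_prod using fin
    by (subst ln_prod) (auto dest: prime_gt_0_nat)
  also have "\<dots> \<le> ln (real ((4::nat)^n))"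
  proof (subst ln_le_cancel_iff)
    show "0 < real (\<Prod>p\<in>{p. prime p \<and> p \<le> n}. p)"
      unfolding of_nat_0_less_iff by (rule prod_pos) (simp add: prime_gt_0_nat)
    show "real (\<Prod>p\<in>{p. prime p \<and> p \<le> n}. p) \<le> real ((4::nat)^n)"
      using prod_primes_le[of n] by (simp only: of_nat_le_iff)
  qed simp
  also have "\<dots> = ln 4 * real n" by (simp add: ln_realpow)
  finally show ?thesis .
qed

lemma theta_nonneg: "theta n \<ge> 0"
  unfolding theta_def by (intro sum_nonneg) (auto dest: prime_ge_1_nat)


definition PS :: "nat \<Rightarrow> nat set" where "PS n = {p. prime p \<and> p \<le> n}"

lemma finite_PS[simp]: "finite (PS n)" unfolding PS_def by simp

definition MA :: "nat \<Rightarrow> real" where "MA n = (\<Sum>p\<in>PS n. ln (real p) / real p)"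

definition Mu :: "nat \<Rightarrow> nat \<Rightarrow> nat" where "Mu p n = (\<Sum>k\<in>{1..n}. multiplicity p k)"

definition LT :: "nat \<Rightarrow> real" where "LT n = (\<Sum>k\<in>{1..n}. ln (real k))"

lemma card_multiples:
  assumes "d > 0"
  shows "card {k\<in>{1..n}. d dvd k} = n div d"
proof -
  have "{k\<in>{1..n}. d dvd k} = (\<lambda>j. d*j) ` {1..n div d}"
  proof (intro equalityI subsetI)
    fix k assume "k \<in> {k\<in>{1..n}. d dvd k}"
    then obtain j where j: "k = d*j" "1 \<le> k" "k \<le> n" by auto
    then have "1 \<le> j" by (cases j) auto
    moreover have "j \<le> n div d"
    proof -
      have "(d * j) div d \<le> n div d" using j by (intro div_le_mono) simp
      then show ?thesis using assms by simp
    qed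
    ultimately show "k \<in> (\<lambda>j. d*j) ` {1..n div d}" using j by auto
  next
    fix k assume "k \<in> (\<lambda>j. d*j) ` {1..n div d}"
    then obtain j where j0: "j \<in> {1..n div d}" "k = d*j" by (rule imageE) auto
    then have j: "k = d*j" "1 \<le> j" "j \<le> n div d" by auto
    have "d * j \<le> d * (n div d)" using j by simp
    also have "\<dots> \<le> n" by simp
    finally show "k \<in> {k\<in>{1..n}. d dvd k}" using j assms by auto
  qed
  moreover have "inj_on (\<lambda>j. d*j) {1..n div d}" using assms by (auto simp: inj_on_def)
  ultimately show ?thesis by (simp add: card_image)
qed

lemma ln_as_sum:
  assumes "1 \<le> k" "k \<le> n"
  shows "ln (real k) = (\<Sum>p\<in>PS n. real (multiplicity p k) * ln (real p))"
proof -
  have k0: "k \<noteq> 0" using assms by simp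
  have "real k = real (\<Prod>p\<in>prime_factors k. p ^ multiplicity p k)"
    using prod_prime_factors[OF k0] by simp
  also have "\<dots> = (\<Prod>p\<in>prime_factors k. real p ^ multiplicity p k)" by simp
  finally have "ln (real k) = ln (\<Prod>p\<in>prime_factors k. real p ^ multiplicity p k)" by simp
  also have "\<dots> = (\<Sum>p\<in>prime_factors k. ln (real p ^ multiplicity p k))"
    by (rule ln_prod) (auto dest: in_prime_factors_imp_prime prime_gt_0_nat)
  also have "\<dots> = (\<Sum>p\<in>prime_factors k. real (multiplicity p k) * ln (real p))"
    by (intro sum.cong refl) (auto simp: ln_realpow dest: in_prime_factors_imp_prime prime_gt_0_nat)
  also have "\<dots> = (\<Sum>p\<in>PS n. real (multiplicity p k) * ln (real p))"
  proof (rule sum.mono_neutral_left)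
    show "prime_factors k \<subseteq> PS n"
      using assms k0 by (auto simp: PS_def in_prime_factors_iff dest!: dvd_imp_le)
    show "\<forall>i\<in>PS n - prime_factors k. real (multiplicity i k) * ln (real i) = 0"
      using k0 by (auto simp: prime_factors_multiplicity PS_def)
  qed simp
  finally show ?thesis .
qed

lemma LT_eq: "LT n = (\<Sum>p\<in>PS n. ln (real p) * real (Mu p n))"
proof -
  have "LT n = (\<Sum>k\<in>{1..n}. \<Sum>p\<in>PS n. real (multiplicity p k) * ln (real p))"
    unfolding LT_def by (intro sum.cong refl ln_as_sum) auto
  also have "\<dots> = (\<Sum>p\<in>PS n. \<Sum>k\<in>{1..n}. real (multiplicity p k) * ln (real p))"
    by (rule sum.swap)
  also have "\<dots> = (\<Sum>p\<in>PS n. ln (real p) * real (Mu p n))"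
    unfolding Mu_def by (simp add: sum_distrib_left sum_distrib_right mult.commute)
  finally show ?thesis .
qed

lemma Mu_lower:
  assumes "prime p"
  shows "n div p \<le> Mu p n"
proof -
  have "n div p = card {k\<in>{1..n}. p dvd k}" using card_multiples[of p n] assms prime_gt_0_nat by simp
  also have "\<dots> = (\<Sum>k\<in>{1..n}. if p dvd k then 1 else 0)"
    by (simp add: sum.If_cases Int_def conj_commute)
  also have "\<dots> \<le> (\<Sum>k\<in>{1..n}. multiplicity p k)"
  proof (rule sum_mono)
    fix k assume "k \<in> {1..n}"
    then show "(if p dvd k then 1 else 0) \<le> multiplicity p k"
      using prime_multiplicity_gt_zero_iff[of p k] assms by auto
  qed
  finally show ?thesis unfolding Mu_def .
qed

lemma geom_aux:
  fixes x :: real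
  shows "(1 - x) * (\<Sum>j\<in>{1..n}. x^j) = x - x^(n+1)"
proof (induction n)
  case 0 then show ?case by simp
next
  case (Suc n)
  have "(\<Sum>j\<in>{1..Suc n}. x^j) = (\<Sum>j\<in>{1..n}. x^j) + x^(Suc n)" by simp
  then have "(1 - x) * (\<Sum>j\<in>{1..Suc n}. x^j) = (1 - x) * (\<Sum>j\<in>{1..n}. x^j) + (1-x) * x^(Suc n)"
    by (simp add: algebra_simps)
  also have "\<dots> = x - x^(Suc n + 1)" using Suc by (simp add: algebra_simps)
  finally show ?case .
qed

lemma geom_bound:
  fixes x :: real
  assumes "0 \<le> x" "x < 1"
  shows "(\<Sum>j\<in>{1..n}. x^j) \<le> x / (1 - x)"
proof -
  have "(1 - x) * (\<Sum>j\<in>{1..n}. x^j) \<le> x" using geom_aux[of x n] assms by simp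
  then show ?thesis using assms by (simp add: field_simps mult.commute)
qed

lemma mult_le_n:
  assumes "prime p" "1 \<le> k" "k \<le> n"
  shows "multiplicity p k \<le> n"
proof -
  have "p ^ multiplicity p k dvd k" by (rule multiplicity_dvd)
  then have "p ^ multiplicity p k \<le> k" using assms by (intro dvd_imp_le) auto
  moreover have "multiplicity p k < 2 ^ multiplicity p k" by (rule less_exp)
  moreover have "2 ^ multiplicity p k \<le> p ^ multiplicity p k"
    using assms prime_ge_2_nat by (intro power_mono) auto
  ultimately show ?thesis using assms by linarith
qed

lemma div_upper: "real (n div p) \<le> real n / real p"
proof (cases "p = 0")
  case False
  have "real (p * (n div p) + n mod p) = real n" by (simp only: mult_div_mod_eq)
  then have "real n = real p * real (n div p) + real (n mod p)" by (simp only: of_nat_add of_nat_mult)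
  then have "real p * real (n div p) \<le> real n" by simp
  then show ?thesis using False by (simp add: field_simps)
qed simp

lemma Mu_upper:
  assumes "prime p"
  shows "real (Mu p n) \<le> real n / (real p - 1)"
proof -
  have p2: "p \<ge> 2" using assms prime_ge_2_nat by simp
  have "\<And>k. k \<in> {1..n} \<Longrightarrow> multiplicity p k = (\<Sum>j\<in>{1..n}. if p^j dvd k then 1 else 0)"
  proof -
    fix k assume k: "k \<in> {1..n}"
    have k0: "k \<noteq> 0" using k by simp
    have nu: "\<not> is_unit p" using p2 by simp
    have iff: "\<And>j. p^j dvd k \<longleftrightarrow> j \<le> multiplicity p k"
      using power_dvd_iff_le_multiplicity[OF k0 nu] by blast
    have ml: "multiplicity p k \<le> n" using k mult_le_n[OF assms, of k n] by simp
    have "{j\<in>{1..n}. p^j dvd k} = {j\<in>{1..n}. j \<le> multiplicity p k}" by (simp only: iff)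
    also have "\<dots> = {1..multiplicity p k}" using ml by auto
    finally have "{j\<in>{1..n}. p^j dvd k} = {1..multiplicity p k}" .
    moreover have "(\<Sum>j\<in>{1..n}. if p^j dvd k then 1 else 0) = card {j\<in>{1..n}. p^j dvd k}"
      by (simp add: sum.If_cases Int_def conj_commute)
    ultimately show "multiplicity p k = (\<Sum>j\<in>{1..n}. if p^j dvd k then 1 else 0)"
      by simp
  qed
  then have "Mu p n = (\<Sum>k\<in>{1..n}. \<Sum>j\<in>{1..n}. if p^j dvd k then 1 else 0)"
    unfolding Mu_def by (rule sum.cong[OF refl])
  also have "\<dots> = (\<Sum>j\<in>{1..n}. \<Sum>k\<in>{1..n}. if p^j dvd k then 1 else 0)" by (rule sum.swap)
  also have "\<dots> = (\<Sum>j\<in>{1..n}. n div p^j)"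
  proof (intro sum.cong refl)
    fix j
    have "(\<Sum>k\<in>{1..n}. if p^j dvd k then 1 else 0) = card {k\<in>{1..n}. p^j dvd k}"
      by (simp add: sum.If_cases Int_def conj_commute)
    also have "\<dots> = n div p^j" using p2 by (intro card_multiples) simp
    finally show "(\<Sum>k\<in>{1..n}. if p^j dvd k then 1 else 0) = n div p^j" .
  qed
  finally have "real (Mu p n) = (\<Sum>j\<in>{1..n}. real (n div p^j))" by simp
  also have "\<dots> \<le> (\<Sum>j\<in>{1..n}. real n * (1 / real p)^j)"
  proof (intro sum_mono)
    fix j
    have "real (n div p^j) \<le> real n / real (p^j)" by (rule div_upper)
    also have "\<dots> = real n * (1 / real p)^j" by (simp add: power_one_over)
    finally show "real (n div p^j) \<le> real n * (1 / real p)^j" .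
  qed
  also have "\<dots> = real n * (\<Sum>j\<in>{1..n}. (1 / real p)^j)" by (simp add: sum_distrib_left)
  also have "\<dots> \<le> real n * ((1 / real p) / (1 - 1 / real p))"
    using p2 by (intro mult_left_mono geom_bound) auto
  also have "\<dots> = real n / (real p - 1)" using p2 by (simp add: field_simps)
  finally show ?thesis .
qed


lemma LT_upper: "LT n \<le> real n * ln (real n)"
proof -
  have "LT n \<le> (\<Sum>k\<in>{1..n}. ln (real n))"
    unfolding LT_def by (intro sum_mono) auto
  then show ?thesis by simp
qed

lemma LT_Suc: "LT (Suc n) = LT n + ln (real (Suc n))"
  unfolding LT_def by simp

lemma LT_lower: "LT n \<ge> real n * ln (real n) - real n"
proof (induction n)
  case 0 then show ?case by (simp add: LT_def)
next
  case (Suc n)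
  show ?case
  proof (cases "n = 0")
    case True then show ?thesis by (simp add: LT_def)
  next
    case False
    then have n1: "real n \<ge> 1" by simp
    have "ln (real (Suc n)) - ln (real n) = ln (1 + 1 / real n)"
    proof -
      have "1 + 1 / real n = real (Suc n) / real n" using n1 by (simp add: field_simps)
      then show ?thesis using n1 by (simp add: ln_div)
    qed
    also have "\<dots> \<le> 1 / real n" using n1 by (intro ln_add_one_self_le_self) simp
    finally have "real n * (ln (real (Suc n)) - ln (real n)) \<le> 1" using n1 by (simp add: field_simps)
    then have "real (Suc n) * ln (real (Suc n)) - real (Suc n) \<le> real n * ln (real n) - real n + ln (real (Suc n))"
      by (simp add: algebra_simps)
    then show ?thesis using Suc LT_Suc[of n] by linarith
  qed
qed

definition c0 :: real where "c0 = suminf (\<lambda>k. 4 * real k powr (-3/2))"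

lemma c0_summable: "summable (\<lambda>k. 4 * real k powr (-3/2))"
  by (intro summable_mult) (simp add: summable_real_powr_iff)

lemma term_bound:
  assumes "p \<ge> 2"
  shows "ln (real p) / (real p * (real p - 1)) \<le> 4 * real p powr (-3/2)"
proof -
  have p: "real p \<ge> 2" using assms by simp
  have "ln (real p) = 2 * ln (sqrt (real p))" using p by (simp add: ln_sqrt)
  also have "\<dots> \<le> 2 * sqrt (real p)" using p by (intro mult_left_mono ln_le_minus_one[THEN order_trans]) auto
  finally have l: "ln (real p) \<le> 2 * sqrt (real p)" .
  have "real p * (real p - 1) \<ge> real p ^ 2 / 2" using p by (simp add: power2_eq_square field_simps)
  have "ln (real p) / (real p * (real p - 1)) \<le> 2 * sqrt (real p) / (real p ^ 2 / 2)"
  proof (rule frac_le)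
    show "0 \<le> 2 * sqrt (real p)" by simp
    show "ln (real p) \<le> 2 * sqrt (real p)" by (rule l)
    show "0 < real p ^ 2 / 2" using p by simp
    show "real p ^ 2 / 2 \<le> real p * (real p - 1)" using p by (simp add: power2_eq_square field_simps)
  qed
  also have "\<dots> = 4 * (real p powr (1/2) / real p powr 2)"
    using p by (simp add: powr_half_sqrt)
  also have "\<dots> = 4 * real p powr (1/2 - 2)"
    using p by (simp only: powr_diff)
  also have "\<dots> = 4 * real p powr (-3/2)" by simp
  finally show ?thesis .
qed

lemma sum_c0: "(\<Sum>p\<in>PS n. ln (real p) / (real p * (real p - 1))) \<le> c0"
proof -
  have "(\<Sum>p\<in>PS n. ln (real p) / (real p * (real p - 1))) \<le> (\<Sum>p\<in>PS n. 4 * real p powr (-3/2))"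
    by (intro sum_mono term_bound) (auto simp: PS_def prime_ge_2_nat)
  also have "\<dots> \<le> c0" unfolding c0_def
    by (intro sum_le_suminf c0_summable) auto
  finally show ?thesis .
qed

lemma div_lower: "p > 0 \<Longrightarrow> real n / real p - 1 \<le> real (n div p)"
proof -
  assume p: "p > 0"
  have "real (p * (n div p) + n mod p) = real n" by (simp only: mult_div_mod_eq)
  then have "real n = real p * real (n div p) + real (n mod p)" by (simp only: of_nat_add of_nat_mult)
  moreover have "real (n mod p) < real p" using p by simp
  ultimately have "real n < real p * (real (n div p) + 1)" by (simp add: algebra_simps)
  then show ?thesis using p by (simp add: field_simps)
qed

lemma MA_upper:
  assumes "n \<ge> 1"
  shows "MA n \<le> ln (real n) + ln 4"
proof -
  have "real n * MA n - theta n = (\<Sum>p\<in>PS n. ln (real p) * (real n / real p - 1))"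
    unfolding MA_def theta_def PS_def[symmetric]
    by (simp add: sum_distrib_left sum_subtractf algebra_simps)
  also have "\<dots> \<le> (\<Sum>p\<in>PS n. ln (real p) * real (Mu p n))"
  proof (intro sum_mono mult_left_mono)
    fix p assume "p \<in> PS n"
    then have p: "prime p" by (simp add: PS_def)
    then have "real n / real p - 1 \<le> real (n div p)" using div_lower prime_gt_0_nat by blast
    also have "\<dots> \<le> real (Mu p n)" using Mu_lower[OF p] by simp
    finally show "real n / real p - 1 \<le> real (Mu p n)" .
    show "0 \<le> ln (real p)" using p prime_ge_1_nat by simp
  qed
  also have "\<dots> = LT n" by (simp add: LT_eq)
  also have "\<dots> \<le> real n * ln (real n)" by (rule LT_upper)
  finally have "real n * MA n \<le> real n * ln (real n) + real n * ln 4" using theta_le[of n] by (simp add: mult.commute)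
  then show ?thesis using assms by (simp add: distrib_left[symmetric])
qed

lemma MA_lower:
  assumes "n \<ge> 1"
  shows "MA n \<ge> ln (real n) - 1 - c0"
proof -
  have "real n * ln (real n) - real n \<le> LT n" by (rule LT_lower)
  also have "\<dots> = (\<Sum>p\<in>PS n. ln (real p) * real (Mu p n))" by (simp add: LT_eq)
  also have "\<dots> \<le> (\<Sum>p\<in>PS n. ln (real p) * (real n / (real p - 1)))"
  proof (intro sum_mono mult_left_mono)
    fix p assume "p \<in> PS n"
    then have p: "prime p" by (simp add: PS_def)
    show "real (Mu p n) \<le> real n / (real p - 1)" by (rule Mu_upper[OF p])
    show "0 \<le> ln (real p)" using p prime_ge_1_nat by simp
  qed
  also have "\<dots> = real n * (\<Sum>p\<in>PS n. ln (real p) / real p + ln (real p) / (real p * (real p - 1)))"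
  proof -
    have "\<And>p. p \<in> PS n \<Longrightarrow> ln (real p) * (real n / (real p - 1)) = real n * (ln (real p) / real p + ln (real p) / (real p * (real p - 1)))"
    proof -
      fix p assume "p \<in> PS n"
      then have p: "real p \<ge> 2" using prime_ge_2_nat by (simp add: PS_def)
      then show "ln (real p) * (real n / (real p - 1)) = real n * (ln (real p) / real p + ln (real p) / (real p * (real p - 1)))"
        by (simp add: field_simps)
    qed
    then show ?thesis by (simp add: sum_distrib_left)
  qed
  also have "\<dots> = real n * (MA n + (\<Sum>p\<in>PS n. ln (real p) / (real p * (real p - 1))))"
    by (simp add: MA_def sum.distrib)
  also have "\<dots> \<le> real n * (MA n + c0)"
    using sum_c0[of n] by (intro mult_left_mono) auto
  finally have "real n * (ln (real n) - 1) \<le> real n * (MA n + c0)" by (simp add: algebra_simps)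
  then have "ln (real n) - 1 \<le> MA n + c0" using assms by (simp add: mult_le_cancel_left)
  then show ?thesis by simp
qed

definition CA :: real where "CA = 1 + c0 + ln 4"

lemma c0_nonneg: "c0 \<ge> 0"
  unfolding c0_def by (intro suminf_nonneg c0_summable) simp

lemma MA_err: "n \<ge> 1 \<Longrightarrow> \<bar>MA n - ln (real n)\<bar> \<le> CA"
proof -
  assume n: "n \<ge> 1"
  have "ln (4::real) \<ge> 0" by simp
  then show ?thesis using MA_upper[OF n] MA_lower[OF n] c0_nonneg unfolding CA_def abs_le_iff
    by (intro conjI; linarith)
qed


definition MB :: "nat \<Rightarrow> real" where "MB n = (\<Sum>p\<in>PS n. ln (real p) ^ 2 / real p)"

lemma PS_Suc: "PS (Suc n) = (if prime (Suc n) then insert (Suc n) (PS n) else PS n)"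
  unfolding PS_def by (auto simp: le_Suc_eq)

lemma PS_1: "PS 1 = {}"
proof -
  have "\<not> (prime p \<and> p \<le> 1)" for p :: nat
  proof
    assume "prime p \<and> p \<le> 1"
    then have "prime p" "p \<le> 1" by auto
    then show False using prime_ge_2_nat[of p] by linarith
  qed
  then show ?thesis unfolding PS_def by blast
qed

lemma PS_Suc0: "PS (Suc 0) = {}" using PS_1 by simp

lemma MA_Suc: "MA (Suc n) = MA n + (if prime (Suc n) then ln (real (Suc n)) / real (Suc n) else 0)"
  unfolding MA_def PS_Suc by (auto simp: PS_def)

lemma MB_Suc: "MB (Suc n) = MB n + ln (real (Suc n)) * (MA (Suc n) - MA n)"
  unfolding MB_def MA_Suc PS_Suc by (auto simp: PS_def power2_eq_square)

definition dl :: "nat \<Rightarrow> real" where "dl k = ln (real (Suc k)) - ln (real k)"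

lemma abel: "n \<ge> 1 \<Longrightarrow> MB n = ln (real n) * MA n - (\<Sum>k\<in>{1..<n}. MA k * dl k)"
proof (induction n rule: dec_induct)
  case base then show ?case by (simp add: MB_def PS_1 PS_Suc0)
next
  case (step n)
  have "MB (Suc n) = MB n + ln (real (Suc n)) * (MA (Suc n) - MA n)" by (rule MB_Suc)
  also have "\<dots> = ln (real (Suc n)) * MA (Suc n) - (\<Sum>k\<in>{1..<Suc n}. MA k * dl k)"
    using step by (simp add: dl_def algebra_simps)
  finally show ?case .
qed

lemma tele1: "n \<ge> 1 \<Longrightarrow> (\<Sum>k\<in>{1..<n}. dl k) = ln (real n)"
  by (induction n rule: dec_induct) (auto simp: dl_def)

lemma tele2: "n \<ge> 1 \<Longrightarrow> (\<Sum>k\<in>{1..<n}. ln (real k) * dl k) = ln (real n)^2/2 - (\<Sum>k\<in>{1..<n}. dl k ^ 2) / 2"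
proof (induction n rule: dec_induct)
  case base then show ?case by simp
next
  case (step n)
  define a where "a = ln (real n)"
  define b where "b = ln (real (Suc n))"
  define S where "S = (\<Sum>k\<in>{1..<n}. ln (real k) * dl k)"
  define T where "T = (\<Sum>k\<in>{1..<n}. dl k ^ 2)"
  have d: "dl n = b - a" unfolding a_def b_def dl_def ..
  have s1: "(\<Sum>k\<in>{1..<Suc n}. ln (real k) * dl k) = S + a * dl n"
    unfolding S_def a_def using step(1) by simp
  have s2: "(\<Sum>k\<in>{1..<Suc n}. dl k ^ 2) = T + dl n ^ 2"
    unfolding T_def using step(1) by simp
  have ih: "S = a^2/2 - T/2" unfolding S_def T_def a_def using step(3) .
  have "S + a * (b - a) = b^2/2 - (T + (b - a)^2)/2"
    unfolding ih by (simp add: power2_eq_square field_simps)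
  then show ?case unfolding s1 s2 d b_def[symmetric] .
qed

lemma dl_bounds: "k \<ge> 1 \<Longrightarrow> 0 \<le> dl k \<and> dl k \<le> 1"
proof -
  assume k: "k \<ge> 1"
  have "dl k = ln (1 + 1 / real k)"
  proof -
    have "1 + 1 / real k = real (Suc k) / real k" using k by (simp add: field_simps)
    then show ?thesis using k by (simp add: ln_div dl_def)
  qed
  moreover have "ln (1 + 1 / real k) \<le> 1 / real k" using k by (intro ln_add_one_self_le_self) simp
  moreover have "1 / real k \<le> 1" using k by simp
  moreover have "0 \<le> ln (1 + 1 / real k)" using k by simp
  ultimately show ?thesis by linarith
qed

definition CB :: real where "CB = 2 * CA + 1/2"

lemma MB_err:
  assumes n: "n \<ge> 1"
  shows "\<bar>MB n - ln (real n)^2/2\<bar> \<le> CB * ln (real n)"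
proof -
  define R where "R k = MA k - ln (real k)" for k
  have eq: "MB n - ln (real n)^2/2 = ln (real n) * R n + (\<Sum>k\<in>{1..<n}. dl k ^ 2) / 2 - (\<Sum>k\<in>{1..<n}. R k * dl k)"
  proof -
    have "(\<Sum>k\<in>{1..<n}. MA k * dl k) = (\<Sum>k\<in>{1..<n}. R k * dl k + ln (real k) * dl k)"
      by (intro sum.cong refl) (simp add: R_def algebra_simps)
    also have "\<dots> = (\<Sum>k\<in>{1..<n}. R k * dl k) + (\<Sum>k\<in>{1..<n}. ln (real k) * dl k)"
      by (rule sum.distrib)
    finally have x: "(\<Sum>k\<in>{1..<n}. MA k * dl k) = (\<Sum>k\<in>{1..<n}. R k * dl k) + (\<Sum>k\<in>{1..<n}. ln (real k) * dl k)" .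
    define SR where "SR = (\<Sum>k\<in>{1..<n}. R k * dl k)"
    define SM where "SM = (\<Sum>k\<in>{1..<n}. MA k * dl k)"
    define SL where "SL = (\<Sum>k\<in>{1..<n}. ln (real k) * dl k)"
    define SD where "SD = (\<Sum>k\<in>{1..<n}. dl k ^ 2)"
    have m: "MA n = R n + ln (real n)" unfolding R_def by simp
    have "MB n = ln (real n) * MA n - SM" unfolding SM_def by (rule abel[OF n])
    moreover have "SM = SR + SL" unfolding SM_def SR_def SL_def by (rule x)
    moreover have "SL = ln (real n)^2/2 - SD/2" unfolding SL_def SD_def by (rule tele2[OF n])
    ultimately have "MB n - ln (real n)^2/2 = ln (real n) * R n + SD / 2 - SR"
      unfolding m by (simp add: power2_eq_square algebra_simps)
    then show ?thesis unfolding SD_def SR_def .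
  qed
  have lnn: "ln (real n) \<ge> 0" using n by simp
  have a1: "\<bar>ln (real n) * R n\<bar> \<le> CA * ln (real n)"
  proof -
    have "\<bar>ln (real n) * R n\<bar> = ln (real n) * \<bar>R n\<bar>" using lnn by (simp add: abs_mult)
    also have "\<dots> \<le> ln (real n) * CA" using MA_err[OF n] lnn unfolding R_def by (intro mult_left_mono) auto
    finally show ?thesis by (simp add: mult.commute)
  qed
  have a2: "0 \<le> (\<Sum>k\<in>{1..<n}. dl k ^ 2) \<and> (\<Sum>k\<in>{1..<n}. dl k ^ 2) \<le> ln (real n)"
  proof
    show "0 \<le> (\<Sum>k\<in>{1..<n}. dl k ^ 2)" by (intro sum_nonneg) simp
    have "(\<Sum>k\<in>{1..<n}. dl k ^ 2) \<le> (\<Sum>k\<in>{1..<n}. dl k)"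
    proof (intro sum_mono)
      fix k assume "k \<in> {1..<n}"
      then have "0 \<le> dl k" "dl k \<le> 1" using dl_bounds[of k] by auto
      then show "dl k ^ 2 \<le> dl k" by (simp add: power2_eq_square mult_le_cancel_right1 mult_left_le)
    qed
    then show "(\<Sum>k\<in>{1..<n}. dl k ^ 2) \<le> ln (real n)" using tele1[OF n] by simp
  qed
  have a3: "\<bar>\<Sum>k\<in>{1..<n}. R k * dl k\<bar> \<le> CA * ln (real n)"
  proof -
    have "\<bar>\<Sum>k\<in>{1..<n}. R k * dl k\<bar> \<le> (\<Sum>k\<in>{1..<n}. \<bar>R k * dl k\<bar>)" by (rule sum_abs)
    also have "\<dots> \<le> (\<Sum>k\<in>{1..<n}. CA * dl k)"
    proof (intro sum_mono)
      fix k assume k: "k \<in> {1..<n}"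
      then have "0 \<le> dl k" using dl_bounds[of k] by auto
      moreover have "\<bar>R k\<bar> \<le> CA" using MA_err[of k] k by (simp add: R_def)
      ultimately show "\<bar>R k * dl k\<bar> \<le> CA * dl k" by (simp add: abs_mult mult_right_mono)
    qed
    also have "\<dots> = CA * ln (real n)" using tele1[OF n] by (simp add: sum_distrib_left[symmetric])
    finally show ?thesis .
  qed
  have cb: "(2 * CA + 1/2) * ln (real n) = 2 * (CA * ln (real n)) + ln (real n) / 2" by (simp add: algebra_simps)
  from a1 have a1a: "ln (real n) * R n \<le> CA * ln (real n)" "- (ln (real n) * R n) \<le> CA * ln (real n)"
    unfolding abs_le_iff by auto
  from a3 have a3a: "(\<Sum>k\<in>{1..<n}. R k * dl k) \<le> CA * ln (real n)" "- (\<Sum>k\<in>{1..<n}. R k * dl k) \<le> CA * ln (real n)"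
    unfolding abs_le_iff by auto
  from a2 have a2a: "0 \<le> (\<Sum>k\<in>{1..<n}. dl k ^ 2)" "(\<Sum>k\<in>{1..<n}. dl k ^ 2) \<le> ln (real n)" by auto
  show ?thesis unfolding eq CB_def abs_le_iff cb using a1a a2a a3a by (intro conjI; linarith)
qed


definition QS :: "nat \<Rightarrow> nat \<Rightarrow> nat set" where "QS n m = {p. prime p \<and> m < p \<and> p \<le> n}"

lemma finite_QS[simp]: "finite (QS n m)"
  by (rule finite_subset[of _ "{..n}"]) (auto simp: QS_def)

lemma ln_Utilde:
  assumes "k \<ge> 1"
  shows "ln (real (Utilde n m k)) = (\<Sum>p\<in>QS n m. if p dvd k then ln (real p) else 0)"
proof -
  have eq: "real (Utilde n m k) = (\<Prod>p\<in>QS n m. real p ^ (if multiplicity p k \<ge> 1 then 1 else 0))"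
    unfolding Utilde_def QS_def by simp
  have "ln (\<Prod>p\<in>QS n m. real p ^ (if multiplicity p k \<ge> 1 then 1 else 0))
      = (\<Sum>p\<in>QS n m. ln (real p ^ (if multiplicity p k \<ge> 1 then 1 else 0)))"
    by (rule ln_prod) (auto simp: QS_def dest: prime_gt_0_nat)
  then have "ln (real (Utilde n m k)) = (\<Sum>p\<in>QS n m. ln (real p ^ (if multiplicity p k \<ge> 1 then 1 else 0)))"
    unfolding eq .
  also have "\<dots> = (\<Sum>p\<in>QS n m. if p dvd k then ln (real p) else 0)"
  proof (intro sum.cong refl)
    fix p assume "p \<in> QS n m"
    then have p: "prime p" by (simp add: QS_def)
    have "multiplicity p k \<ge> 1 \<longleftrightarrow> p dvd k"
      using prime_multiplicity_gt_zero_iff[of p k] p assms by auto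
    then show "ln (real p ^ (if multiplicity p k \<ge> 1 then 1 else 0)) = (if p dvd k then ln (real p) else 0)"
      by simp
  qed
  finally show ?thesis .
qed

lemma sq_sum_orth:
  fixes a :: "nat \<Rightarrow> real"
  assumes "finite Q" "\<And>p q. p \<in> Q \<Longrightarrow> q \<in> Q \<Longrightarrow> p \<noteq> q \<Longrightarrow> a p * a q = 0"
  shows "(\<Sum>p\<in>Q. a p)^2 = (\<Sum>p\<in>Q. a p ^ 2)"
proof -
  have "(\<Sum>p\<in>Q. a p)^2 = (\<Sum>p\<in>Q. \<Sum>q\<in>Q. a p * a q)"
    by (simp add: power2_eq_square sum_product)
  also have "\<dots> = (\<Sum>p\<in>Q. a p ^ 2)"
  proof (intro sum.cong refl)
    fix p assume p: "p \<in> Q"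
    have "(\<Sum>q\<in>Q. a p * a q) = a p * a p + (\<Sum>q\<in>Q - {p}. a p * a q)"
      using assms(1) p by (simp add: sum.remove)
    also have "(\<Sum>q\<in>Q - {p}. a p * a q) = 0"
      using assms(2)[OF p] by (intro sum.neutral) auto
    finally show "(\<Sum>q\<in>Q. a p * a q) = a p ^ 2" by (simp add: power2_eq_square)
  qed
  finally show ?thesis .
qed

lemma ln_Utilde_sq:
  assumes "k \<ge> 1" "k \<le> n" "n < m * m"
  shows "ln (real (Utilde n m k))^2 = (\<Sum>p\<in>QS n m. if p dvd k then ln (real p)^2 else 0)"
proof -
  have "(\<Sum>p\<in>QS n m. if p dvd k then ln (real p) else 0)^2 = (\<Sum>p\<in>QS n m. (if p dvd k then ln (real p) else 0)^2)"
  proof (rule sq_sum_orth)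
    fix p q assume pq: "p \<in> QS n m" "q \<in> QS n m" "p \<noteq> q"
    show "(if p dvd k then ln (real p) else 0) * (if q dvd k then ln (real q) else 0) = 0"
    proof (cases "p dvd k \<and> q dvd k")
      case True
      have "coprime p q" using pq by (intro primes_coprime) (auto simp: QS_def)
      then have "p * q dvd k" using True by (intro divides_mult) auto
      then have "p * q \<le> k" using assms by (intro dvd_imp_le) auto
      moreover have "m * m < p * q" using pq by (intro mult_strict_mono) (auto simp: QS_def)
      ultimately show ?thesis using assms by linarith
    qed auto
  qed simp
  also have "(\<Sum>p\<in>QS n m. (if p dvd k then ln (real p) else 0)^2) = (\<Sum>p\<in>QS n m. if p dvd k then ln (real p)^2 else 0)"
    by (intro sum.cong refl) simp
  finally show ?thesis unfolding ln_Utilde[OF assms(1)] .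
qed

lemma sum_dvd_count:
  fixes g :: "nat \<Rightarrow> real"
  shows "(\<Sum>k\<in>{1..n}. \<Sum>p\<in>QS n m. if p dvd k then g p else 0) = (\<Sum>p\<in>QS n m. g p * real (n div p))"
proof -
  have "(\<Sum>k\<in>{1..n}. \<Sum>p\<in>QS n m. if p dvd k then g p else 0) = (\<Sum>p\<in>QS n m. \<Sum>k\<in>{1..n}. if p dvd k then g p else 0)"
    by (rule sum.swap)
  also have "\<dots> = (\<Sum>p\<in>QS n m. g p * real (n div p))"
  proof (intro sum.cong refl)
    fix p assume "p \<in> QS n m"
    then have p: "p > 0" by (auto simp: QS_def prime_gt_0_nat)
    have "(\<Sum>k\<in>{1..n}. if p dvd k then g p else 0) = g p * real (card {k\<in>{1..n}. p dvd k})"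
      by (simp add: sum.If_cases Int_def conj_commute)
    then show "(\<Sum>k\<in>{1..n}. if p dvd k then g p else 0) = g p * real (n div p)"
      using card_multiples[OF p] by simp
  qed
  finally show ?thesis .
qed

lemma variance_formula:
  assumes "1 \<le> n" "n < m * m"
  shows "measure_pmf.variance (pmf_of_set {1..n}) (\<lambda>k. ln (real (Utilde n m k)))
       = (\<Sum>p\<in>QS n m. ln (real p)^2 * real (n div p)) / real n
         - ((\<Sum>p\<in>QS n m. ln (real p) * real (n div p)) / real n)^2"
proof -
  define f where "f k = ln (real (Utilde n m k))" for k
  define S1 where "S1 = (\<Sum>p\<in>QS n m. ln (real p) * real (n div p)) / real n"
  define S2 where "S2 = (\<Sum>p\<in>QS n m. ln (real p)^2 * real (n div p)) / real n"
  have ne: "{1..n} \<noteq> {}" using assms by simp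
  have F1: "(\<Sum>k\<in>{1..n}. f k) = real n * S1"
  proof -
    have "(\<Sum>k\<in>{1..n}. f k) = (\<Sum>k\<in>{1..n}. \<Sum>p\<in>QS n m. if p dvd k then ln (real p) else 0)"
      unfolding f_def by (intro sum.cong refl ln_Utilde) auto
    also have "\<dots> = (\<Sum>p\<in>QS n m. ln (real p) * real (n div p))" by (rule sum_dvd_count)
    finally show ?thesis using assms unfolding S1_def by simp
  qed
  have E1: "measure_pmf.expectation (pmf_of_set {1..n}) f = S1"
  proof -
    have "measure_pmf.expectation (pmf_of_set {1..n}) f = (\<Sum>k\<in>{1..n}. f k) / real n"
      using ne by (simp add: integral_pmf_of_set)
    then show ?thesis unfolding F1 using assms by simp
  qed
  have F2: "(\<Sum>k\<in>{1..n}. f k ^ 2) = real n * S2"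
  proof -
    have "(\<Sum>k\<in>{1..n}. f k ^ 2) = (\<Sum>k\<in>{1..n}. \<Sum>p\<in>QS n m. if p dvd k then ln (real p)^2 else 0)"
      unfolding f_def using assms by (intro sum.cong refl ln_Utilde_sq) auto
    also have "\<dots> = (\<Sum>p\<in>QS n m. ln (real p)^2 * real (n div p))" by (rule sum_dvd_count)
    finally show ?thesis using assms unfolding S2_def by simp
  qed
  have "measure_pmf.variance (pmf_of_set {1..n}) f = (\<Sum>k\<in>{1..n}. (f k - S1)^2) / real n"
    using ne by (simp only: E1) (simp add: integral_pmf_of_set)
  also have "(\<Sum>k\<in>{1..n}. (f k - S1)^2) = (\<Sum>k\<in>{1..n}. f k ^ 2) - 2 * S1 * (\<Sum>k\<in>{1..n}. f k) + real n * S1^2"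
    by (simp add: power2_diff sum.distrib sum_subtractf sum_distrib_left mult.commute mult.left_commute)
  also have "\<dots> = real n * (S2 - S1^2)" unfolding F1 F2 by (simp add: power2_eq_square algebra_simps)
  finally show ?thesis using assms unfolding f_def S1_def[symmetric] S2_def[symmetric] by simp
qed


lemma sum_approx:
  fixes g :: "nat \<Rightarrow> real"
  assumes "\<And>p. p \<in> QS n m \<Longrightarrow> g p \<ge> 0" "n \<ge> 1"
  shows "\<bar>(\<Sum>p\<in>QS n m. g p * real (n div p)) / real n - (\<Sum>p\<in>QS n m. g p / real p)\<bar>
         \<le> (\<Sum>p\<in>QS n m. g p) / real n"
proof -
  have "(\<Sum>p\<in>QS n m. g p * real (n div p)) / real n = (\<Sum>p\<in>QS n m. g p * real (n div p) / real n)"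
    by (rule sum_divide_distrib)
  then have "(\<Sum>p\<in>QS n m. g p * real (n div p)) / real n - (\<Sum>p\<in>QS n m. g p / real p)
        = (\<Sum>p\<in>QS n m. g p * real (n div p) / real n - g p / real p)"
    by (simp add: sum_subtractf)
  also have "\<dots> = (\<Sum>p\<in>QS n m. g p * (real (n div p) / real n - 1 / real p))"
    by (intro sum.cong refl) (simp add: right_diff_distrib)
  finally have "(\<Sum>p\<in>QS n m. g p * real (n div p)) / real n - (\<Sum>p\<in>QS n m. g p / real p)
        = (\<Sum>p\<in>QS n m. g p * (real (n div p) / real n - 1 / real p))" .
  moreover have bnd: "\<And>p. p \<in> QS n m \<Longrightarrow> - 1 / real n \<le> real (n div p) / real n - 1 / real p \<and>
                        real (n div p) / real n - 1 / real p \<le> 0"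
  proof -
    fix p assume "p \<in> QS n m"
    then have p: "p > 0" by (auto simp: QS_def prime_gt_0_nat)
    have a: "real (n div p) \<le> real n / real p" by (rule div_upper)
    have b: "real n / real p - 1 \<le> real (n div p)" using div_lower[OF p] .
    have "real (n div p) / real n \<le> (real n / real p) / real n" by (rule divide_right_mono[OF a]) simp
    also have "\<dots> = 1 / real p" using assms by simp
    finally have 1: "real (n div p) / real n - 1 / real p \<le> 0" by simp
    have "(real n / real p - 1) / real n \<le> real (n div p) / real n" by (rule divide_right_mono[OF b]) simp
    moreover have "(real n / real p - 1) / real n = 1 / real p - 1 / real n" using assms by (simp add: field_simps)
    ultimately have 2: "- 1 / real n \<le> real (n div p) / real n - 1 / real p" by simp
    show "- 1 / real n \<le> real (n div p) / real n - 1 / real p \<and> real (n div p) / real n - 1 / real p \<le> 0"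
      using 1 2 by simp
  qed
  then have "\<bar>\<Sum>p\<in>QS n m. g p * (real (n div p) / real n - 1 / real p)\<bar> \<le> (\<Sum>p\<in>QS n m. g p * (1 / real n))"
  proof -
    have "\<bar>\<Sum>p\<in>QS n m. g p * (real (n div p) / real n - 1 / real p)\<bar> \<le> (\<Sum>p\<in>QS n m. \<bar>g p * (real (n div p) / real n - 1 / real p)\<bar>)"
      by (rule sum_abs)
    also have "\<dots> \<le> (\<Sum>p\<in>QS n m. g p * (1 / real n))"
    proof (intro sum_mono)
      fix p assume p: "p \<in> QS n m"
      have x: "\<bar>real (n div p) / real n - 1 / real p\<bar> \<le> 1 / real n"
        using bnd[OF p] by (simp add: abs_le_iff)
      have eq: "\<bar>g p * (real (n div p) / real n - 1 / real p)\<bar> = g p * \<bar>real (n div p) / real n - 1 / real p\<bar>"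
        using assms(1)[OF p] by (simp add: abs_mult)
      have "g p * \<bar>real (n div p) / real n - 1 / real p\<bar> \<le> g p * (1 / real n)"
        by (rule mult_left_mono[OF x assms(1)[OF p]])
      then show "\<bar>g p * (real (n div p) / real n - 1 / real p)\<bar> \<le> g p * (1 / real n)"
        by (simp only: eq)
    qed
    finally show ?thesis .
  qed
  ultimately show ?thesis by (simp add: sum_divide_distrib[symmetric])
qed

lemma PS_split: "m \<le> n \<Longrightarrow> PS n = PS m \<union> QS n m \<and> PS m \<inter> QS n m = {}"
  unfolding PS_def QS_def by auto

lemma sumQ_theta: "(\<Sum>p\<in>QS n m. ln (real p)) \<le> ln 4 * real n"
proof -
  have "(\<Sum>p\<in>QS n m. ln (real p)) \<le> (\<Sum>p\<in>PS n. ln (real p))"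
    by (intro sum_mono2) (auto simp: PS_def QS_def dest: prime_ge_1_nat)
  also have "\<dots> = theta n" by (simp add: theta_def PS_def)
  finally show ?thesis using theta_le[of n] by simp
qed

definition c1 :: real where "c1 = 2 * CA + ln 4"
definition c2 :: real where "c2 = 2 * CB + ln 4"

lemma err_S1:
  assumes "1 \<le> m" "m \<le> n"
  shows "\<bar>(\<Sum>p\<in>QS n m. ln (real p) * real (n div p)) / real n - (ln (real n) - ln (real m))\<bar> \<le> c1"
proof -
  have n: "n \<ge> 1" using assms by simp
  have split: "MA n = MA m + (\<Sum>p\<in>QS n m. ln (real p) / real p)"
    unfolding MA_def using PS_split[OF assms(2)] by (simp add: sum.union_disjoint)
  have a: "\<bar>(\<Sum>p\<in>QS n m. ln (real p) * real (n div p)) / real n - (\<Sum>p\<in>QS n m. ln (real p) / real p)\<bar> \<le> ln 4"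
  proof -
    have "\<bar>(\<Sum>p\<in>QS n m. ln (real p) * real (n div p)) / real n - (\<Sum>p\<in>QS n m. ln (real p) / real p)\<bar>
      \<le> (\<Sum>p\<in>QS n m. ln (real p)) / real n"
      using n by (intro sum_approx) (auto simp: QS_def prime_ge_1_nat)
    also have "\<dots> \<le> ln 4 * real n / real n" using sumQ_theta[of n m] n by (intro divide_right_mono) auto
    finally show ?thesis using n by simp
  qed
  show ?thesis using a MA_err[OF n] MA_err[OF assms(1)] split unfolding c1_def by (simp add: abs_le_iff)
qed

lemma err_S2:
  assumes "1 \<le> m" "m \<le> n"
  shows "\<bar>(\<Sum>p\<in>QS n m. ln (real p)^2 * real (n div p)) / real n - (ln (real n)^2 - ln (real m)^2)/2\<bar> \<le> c2 * ln (real n)"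
proof -
  have n: "n \<ge> 1" using assms by simp
  have split: "MB n = MB m + (\<Sum>p\<in>QS n m. ln (real p)^2 / real p)"
    unfolding MB_def using PS_split[OF assms(2)] by (simp add: sum.union_disjoint)
  have a: "\<bar>(\<Sum>p\<in>QS n m. ln (real p)^2 * real (n div p)) / real n - (\<Sum>p\<in>QS n m. ln (real p)^2 / real p)\<bar> \<le> ln (real n) * ln 4"
  proof -
    have "\<bar>(\<Sum>p\<in>QS n m. ln (real p)^2 * real (n div p)) / real n - (\<Sum>p\<in>QS n m. ln (real p)^2 / real p)\<bar>
      \<le> (\<Sum>p\<in>QS n m. ln (real p)^2) / real n"
      using n by (intro sum_approx) (auto simp: QS_def prime_ge_1_nat)
    also have "(\<Sum>p\<in>QS n m. ln (real p)^2) \<le> (\<Sum>p\<in>QS n m. ln (real n) * ln (real p))"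
    proof (intro sum_mono)
      fix p assume "p \<in> QS n m"
      then have "prime p" "p \<le> n" by (auto simp: QS_def)
      then have "0 \<le> ln (real p)" "ln (real p) \<le> ln (real n)" using prime_gt_0_nat[of p] prime_ge_1_nat[of p] by auto
      then show "ln (real p)^2 \<le> ln (real n) * ln (real p)" by (simp add: power2_eq_square mult_right_mono)
    qed
    also have "\<dots> = ln (real n) * (\<Sum>p\<in>QS n m. ln (real p))" by (simp add: sum_distrib_left)
    also have "\<dots> \<le> ln (real n) * (ln 4 * real n)" using n by (intro mult_left_mono sumQ_theta) auto
    finally show ?thesis using n by (simp add: divide_right_mono)
  qed
  have lm: "0 \<le> ln (real m)" "ln (real m) \<le> ln (real n)" using assms by auto
  have "\<bar>MB m - ln (real m)^2/2\<bar> \<le> CB * ln (real m)" by (rule MB_err[OF assms(1)])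
  moreover have "CB * ln (real m) \<le> CB * ln (real n)" using lm unfolding CB_def CA_def using c0_nonneg
    by (intro mult_left_mono) auto
  ultimately have b: "\<bar>MB m - ln (real m)^2/2\<bar> \<le> CB * ln (real n)" by linarith
  have c: "\<bar>MB n - ln (real n)^2/2\<bar> \<le> CB * ln (real n)" by (rule MB_err[OF n])
  have e1: "c2 * ln (real n) = 2 * (CB * ln (real n)) + ln (real n) * ln 4" unfolding c2_def by (simp add: algebra_simps)
  have e2: "(ln (real n)^2 - ln (real m)^2)/2 = ln (real n)^2/2 - ln (real m)^2/2" by (simp add: diff_divide_distrib)
  show ?thesis using a b c split unfolding e1 e2 abs_le_iff by (intro conjI; linarith)
qed

lemma final_arith:
  fixes L l e1 e2 c1 c2 :: real
  assumes D: "L - l > 0" and L: "L > 0" and ll: "2 * l > L" and e1: "\<bar>e1\<bar> \<le> c1" and e2: "\<bar>e2\<bar> \<le> c2 * L"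
  shows "\<bar>(((L^2 - l^2)/2 + e2) - (L - l + e1)^2) / ((1/2) * (L - l) * (3 * l - L)) - 1\<bar>
         \<le> 4 * c2 / (L - l) + 8 * c1 / L + 4 * c1^2 / ((L - l) * L)"
proof -
  define g where "g = (1/2) * (L - l) * (3 * l - L)"
  define D where "D = L - l"
  have gD: "g \<ge> D * L / 4"
  proof -
    have "L / 4 \<le> (1/2) * (3 * l - L)" using ll by simp
    then have "(L - l) * (L / 4) \<le> (L - l) * ((1/2) * (3 * l - L))" using D by (intro mult_left_mono) auto
    moreover have "D * L / 4 = (L - l) * (L / 4)" unfolding D_def by simp
    moreover have "g = (L - l) * ((1/2) * (3 * l - L))" unfolding g_def by simp
    ultimately show ?thesis by linarith
  qed
  have DL: "D * L / 4 > 0" using D L unfolding D_def by simp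
  have gpos: "g > 0" using gD DL by linarith
  have diff: "(((L^2 - l^2)/2 + e2) - (L - l + e1)^2) - g = e2 - 2 * D * e1 - e1^2"
  proof -
    have "(L^2 - l^2)/2 = (L - l) * (L + l) / 2" by (simp add: power2_eq_square algebra_simps)
    then show ?thesis unfolding g_def D_def
      by (simp add: power2_eq_square algebra_simps add_divide_distrib diff_divide_distrib)
  qed
  have c1: "c1 \<ge> 0" using e1 by simp
  have Dp: "D > 0" using D unfolding D_def .
  have "\<bar>e2 - 2 * D * e1 - e1^2\<bar> \<le> c2 * L + 2 * c1 * D + c1^2"
  proof -
    have t: "\<bar>e2 - 2 * D * e1 - e1^2\<bar> \<le> \<bar>e2\<bar> + \<bar>2 * D * e1\<bar> + \<bar>e1^2\<bar>"
      using abs_triangle_ineq4[of "e2 - 2 * D * e1" "e1^2"] abs_triangle_ineq4[of e2 "2 * D * e1"] by linarith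
    have "\<bar>2 * D * e1\<bar> = (2 * D) * \<bar>e1\<bar>" using Dp by (simp add: abs_mult)
    also have "\<dots> \<le> (2 * D) * c1" by (rule mult_left_mono[OF e1]) (use Dp in simp)
    finally have t2: "\<bar>2 * D * e1\<bar> \<le> 2 * c1 * D" by (simp add: mult.commute mult.left_commute)
    have "\<bar>e1^2\<bar> = \<bar>e1\<bar>^2" by simp
    also have "\<dots> \<le> c1^2" by (rule power_mono[OF e1]) simp
    finally have t3: "\<bar>e1^2\<bar> \<le> c1^2" .
    show ?thesis using t t2 t3 e2 by linarith
  qed
  note bound = this
  define V where "V = ((L^2 - l^2)/2 + e2) - (L - l + e1)^2"
  have "V / g - 1 = (V - g) / g" using gpos by (simp add: diff_divide_distrib)
  then have "\<bar>V / g - 1\<bar> = \<bar>V - g\<bar> / g" using gpos by simp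
  also have "\<dots> \<le> (c2 * L + 2 * c1 * D + c1^2) / g"
    using bound diff gpos unfolding V_def by (intro divide_right_mono) auto
  finally have "\<bar>(((L^2 - l^2)/2 + e2) - (L - l + e1)^2) / g - 1\<bar> \<le> (c2 * L + 2 * c1 * D + c1^2) / g"
    unfolding V_def .
  also have "\<dots> \<le> (c2 * L + 2 * c1 * D + c1^2) / (D * L / 4)"
  proof (rule divide_left_mono[OF gD])
    have "0 \<le> c2 * L" using e2 abs_ge_zero[of e2] by linarith
    moreover have "0 \<le> 2 * c1 * D" using c1 D unfolding D_def by simp
    moreover have "0 \<le> c1^2" by simp
    ultimately show "0 \<le> c2 * L + 2 * c1 * D + c1^2" by linarith
    show "0 < g * (D * L / 4)" using gpos DL by simp
  qed
  also have "\<dots> = 4 * c2 / D + 8 * c1 / L + 4 * c1^2 / (D * L)"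
  proof -
    have D0: "D \<noteq> 0" and L0: "L \<noteq> 0" using Dp L by auto
    have "(c2 * L + 2 * c1 * D + c1^2) / (D * L / 4) = 4 * (c2 * L) / (D * L) + 4 * (2 * c1 * D) / (D * L) + 4 * c1^2 / (D * L)"
      by (simp add: add_divide_distrib distrib_left mult.commute)
    moreover have "4 * (c2 * L) / (D * L) = 4 * c2 / D" using L0 by simp
    moreover have "4 * (2 * c1 * D) / (D * L) = 8 * c1 / L" using D0 by simp
    ultimately show ?thesis by simp
  qed
  finally show ?thesis unfolding g_def D_def .
qed

theorem theorem5p5:
  fixes m :: "nat \<Rightarrow> nat"
  assumes "\<forall>\<^sub>F n in at_top. real (m n) > sqrt (real n)"
    and "(\<lambda>n. real (m n) / real n) \<longlonglongrightarrow> 0"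
  shows "(\<lambda>n. measure_pmf.variance (pmf_of_set {1..n})
             (\<lambda>k. ln (real (Utilde n (m n) k))))
         \<sim>[at_top] (\<lambda>n. (1/2) * (ln (real n) - ln (real (m n)))
                          * (3 * ln (real (m n)) - ln (real n)))"
proof -
  define V where "V n = measure_pmf.variance (pmf_of_set {1..n}) (\<lambda>k. ln (real (Utilde n (m n) k)))" for n
  define g where "g n = (1/2) * (ln (real n) - ln (real (m n))) * (3 * ln (real (m n)) - ln (real n))" for n
  define L where "L n = ln (real n)" for n
  define D where "D n = ln (real n) - ln (real (m n))" for n
  define h where "h n = 4 * c2 * inverse (D n) + 8 * c1 * inverse (L n) + 4 * c1^2 * (inverse (D n) * inverse (L n))" for n
  have ev_lt: "\<forall>\<^sub>F n in at_top. real (m n) / real n < 1"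
    using assms(2) by (rule order_tendstoD) simp
  have ev_big: "\<forall>\<^sub>F n in at_top. n \<ge> (2::nat)" by (rule eventually_ge_at_top)
  have ev_pos: "\<forall>\<^sub>F n in at_top. real (m n) / real n > 0"
    using assms(1) ev_big
  proof eventually_elim
    case (elim n)
    have "0 \<le> sqrt (real n)" by simp
    then have "real (m n) > 0" using elim by linarith
    moreover have "real n > 0" using elim by simp
    ultimately show ?case by simp
  qed
  have Lt: "filterlim L at_top at_top"
    unfolding L_def by (rule filterlim_compose[OF ln_at_top filterlim_real_sequentially])
  have Dt: "filterlim D at_top at_top"
  proof -
    have "filterlim (\<lambda>n. real (m n) / real n) (at_right 0) at_top"
      using assms(2) ev_pos by (rule tendsto_imp_filterlim_at_right)
    then have "filterlim (\<lambda>n. ln (real (m n) / real n)) at_bot at_top"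
      by (rule filterlim_compose[OF ln_at_0])
    then have "filterlim (\<lambda>n. - ln (real (m n) / real n)) at_top at_top"
      by (simp add: filterlim_uminus_at_top)
    moreover have "\<forall>\<^sub>F n in at_top. - ln (real (m n) / real n) = D n"
      using ev_pos ev_big by eventually_elim (auto simp: D_def ln_div zero_less_divide_iff)
    ultimately show ?thesis using filterlim_cong[OF refl refl, of "\<lambda>n. - ln (real (m n) / real n)" D at_top at_top] by blast
  qed
  have h0: "h \<longlonglongrightarrow> 0"
  proof -
    have iD: "(\<lambda>n. inverse (D n)) \<longlonglongrightarrow> 0" using Dt by (rule tendsto_inverse_0_at_top)
    have iL: "(\<lambda>n. inverse (L n)) \<longlonglongrightarrow> 0" using Lt by (rule tendsto_inverse_0_at_top)
    have "(\<lambda>n. 4 * c2 * inverse (D n) + 8 * c1 * inverse (L n) + 4 * c1^2 * (inverse (D n) * inverse (L n)))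
          \<longlonglongrightarrow> 4 * c2 * 0 + 8 * c1 * 0 + 4 * c1^2 * (0 * 0)"
      by (intro tendsto_intros iD iL)
    then show ?thesis unfolding h_def by simp
  qed
  have ev_bound: "\<forall>\<^sub>F n in at_top. norm (V n / g n - 1) \<le> h n"
    using assms(1) ev_lt ev_big ev_pos
  proof eventually_elim
    case (elim n)
    have n1: "real n \<ge> 2" using elim by simp
    have mpos: "real (m n) > 0" using elim n1 by (simp add: zero_less_divide_iff)
    have m1: "1 \<le> m n" using mpos by simp
    have mn: "m n < n" using elim n1 by (simp add: divide_less_eq)
    have "sqrt (real n) ^ 2 < real (m n) ^ 2"
      by (rule power_strict_mono) (use elim(1) in auto)
    then have msq: "real n < real (m n) ^ 2" by simp
    have nmm: "n < m n * m n" using msq by (simp add: power2_eq_square flip: of_nat_mult)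
    have V: "V n = (\<Sum>p\<in>QS n (m n). ln (real p)^2 * real (n div p)) / real n
         - ((\<Sum>p\<in>QS n (m n). ln (real p) * real (n div p)) / real n)^2"
      unfolding V_def using nmm n1 by (intro variance_formula) auto
    define e1 where "e1 = (\<Sum>p\<in>QS n (m n). ln (real p) * real (n div p)) / real n - (ln (real n) - ln (real (m n)))"
    define e2 where "e2 = (\<Sum>p\<in>QS n (m n). ln (real p)^2 * real (n div p)) / real n - (ln (real n)^2 - ln (real (m n))^2)/2"
    have E1: "\<bar>e1\<bar> \<le> c1" unfolding e1_def using err_S1[OF m1] mn by simp
    have E2: "\<bar>e2\<bar> \<le> c2 * ln (real n)" unfolding e2_def using err_S2[OF m1] mn by simp
    have Dp: "ln (real n) - ln (real (m n)) > 0" using mn mpos by simp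
    have Lp: "ln (real n) > 0" using n1 by simp
    have ll: "2 * ln (real (m n)) > ln (real n)"
    proof -
      have "ln (real n) < ln (real (m n) ^ 2)"
        by (rule ln_less_cancel_iff[THEN iffD2]) (use msq n1 mpos in simp_all)
      then show ?thesis using mpos by (simp add: ln_realpow)
    qed
    have "V n = ((ln (real n)^2 - ln (real (m n))^2)/2 + e2) - (ln (real n) - ln (real (m n)) + e1)^2"
      unfolding V e1_def e2_def by simp
    then have "\<bar>V n / g n - 1\<bar> \<le> 4 * c2 / D n + 8 * c1 / L n + 4 * c1^2 / (D n * L n)"
      unfolding g_def D_def L_def using final_arith[OF Dp Lp ll E1 E2] by simp
    then show ?case by (simp add: h_def divide_inverse)
  qed
  have "((\<lambda>n. V n / g n - 1) \<longlongrightarrow> 0) at_top"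
    using ev_bound h0 by (rule Lim_null_comparison)
  then have "((\<lambda>n. V n / g n) \<longlongrightarrow> 1) at_top" by (rule LIM_zero_cancel)
  then have "V \<sim>[at_top] g" by (rule asymp_equivI')
  then show ?thesis unfolding V_def g_def .
qed

end
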